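(* Any bandit-feedback learning algorithm for episodic MDPs with $k=2$ levels, horizon length $H$ and $A$ actions has expected regret $\Omega\left(\min\left\{\sqrt{ A^H T} \,,\, T\right\}\right)$ over $T$ episodes; that is, there is an absolute constant $c>0$ such that for every such algorithm there is an MDP instance with $k=2$ on which its expected regret is at least $c\min\{\sqrt{A^HT},T\}$.
   Context: An episodic MDP has states $(l,i)$ for levels $l\in[k]$ and stages $i\in[H]$, start state $(1,1)$, and action set $\mathcal{A}$ of size $A$. For $i\in[H-1]$, action $a$ at $(l,i)$ moves to $(s,i+1)$ with probability $p_i(s\mid l,a)$. Action $a$ at $(l,i)$ yields a random reward $R_{l,i}(a)\ge0$ with mean $r_{l,i}(a)$, and the total reward of any execution lies in $[0,1]$. A deterministic policy is a matrix $(\pi_{l,i})$ of actions; its value $V(\Pi)$ is its expected total reward, and $\mathsf{Opt}$ is the maximum value. Bandit-feedback learning: transitions and rewards are unknown; in each of $T$ episodes the learner chooses a policy $\pi^t$ based on past observations, executes it once, and observes only the total reward of the episode (not the visited states nor per-step rewards). Regret is $\sum_{t=1}^T(\mathsf{Opt}-V(\pi^t))$; expected regret is its expectation. *)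

theory Defs
  imports "HOL-Probability.Probability_Mass_Function"
begin

text \<open>Episodic MDP with levels l < k and stages i < H (0-based; start state (0,0)),
  actions a < A.  trans M i l a : distribution of the next level when action a is taken
  at (l,i) (only relevant for i+1 < H);  rew M l i a : distribution of the random reward
  R_{l,i}(a).\<close>
record mdp =
  trans :: "nat \<Rightarrow> nat \<Rightarrow> nat \<Rightarrow> nat pmf"
  rew   :: "nat \<Rightarrow> nat \<Rightarrow> nat \<Rightarrow> real pmf"

definition valid_mdp :: "nat \<Rightarrow> nat \<Rightarrow> nat \<Rightarrow> mdp \<Rightarrow> bool" where
  "valid_mdp k H A M \<longleftrightarrow>
     (\<forall>i l a. i + 1 < H \<and> l < k \<and> a < A \<longrightarrow> set_pmf (trans M i l a) \<subseteq> {..<k}) \<and>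
     (\<forall>l i a x. l < k \<and> i < H \<and> a < A \<and> x \<in> set_pmf (rew M l i a) \<longrightarrow> 0 \<le> x) \<and>
     (\<forall>ls as xs. (\<forall>i<H. ls i < k \<and> as i < A \<and> xs i \<in> set_pmf (rew M (ls i) i (as i)))
        \<longrightarrow> (\<Sum>i<H. xs i) \<le> 1)"

definition policies :: "nat \<Rightarrow> nat \<Rightarrow> nat \<Rightarrow> (nat \<Rightarrow> nat \<Rightarrow> nat) set" where
  "policies k H A = {\<pi>. \<forall>l i. (l < k \<and> i < H \<longrightarrow> \<pi> l i < A) \<and>
                                (\<not> (l < k \<and> i < H) \<longrightarrow> \<pi> l i = 0)}"

primrec run :: "mdp \<Rightarrow> (nat \<Rightarrow> nat \<Rightarrow> nat) \<Rightarrow> nat \<Rightarrow> nat \<Rightarrow> nat \<Rightarrow> real pmf" where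
  "run M \<pi> 0 l i = return_pmf 0"
| "run M \<pi> (Suc n) l i =
     bind_pmf (rew M l i (\<pi> l i)) (\<lambda>x.
     bind_pmf (trans M i l (\<pi> l i)) (\<lambda>s.
     bind_pmf (run M \<pi> n s (Suc i)) (\<lambda>y. return_pmf (x + y))))"

definition episode :: "mdp \<Rightarrow> nat \<Rightarrow> (nat \<Rightarrow> nat \<Rightarrow> nat) \<Rightarrow> real pmf" where
  "episode M H \<pi> = run M \<pi> H 0 0"

definition pvalue :: "mdp \<Rightarrow> nat \<Rightarrow> (nat \<Rightarrow> nat \<Rightarrow> nat) \<Rightarrow> real" where
  "pvalue M H \<pi> = measure_pmf.expectation (episode M H \<pi>) (\<lambda>x. x)"

definition opt :: "nat \<Rightarrow> nat \<Rightarrow> nat \<Rightarrow> mdp \<Rightarrow> real" where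
  "opt k H A M = Max (pvalue M H ` policies k H A)"

text \<open>A (possibly randomized) bandit-feedback algorithm maps the history of
  (chosen policy, observed total reward) pairs, oldest first, to a distribution over
  the next policy.  history M H alg t is the law of the history after t episodes.\<close>
type_synonym algorithm = "((nat \<Rightarrow> nat \<Rightarrow> nat) \<times> real) list \<Rightarrow> (nat \<Rightarrow> nat \<Rightarrow> nat) pmf"

primrec history :: "mdp \<Rightarrow> nat \<Rightarrow> algorithm \<Rightarrow> nat \<Rightarrow> ((nat \<Rightarrow> nat \<Rightarrow> nat) \<times> real) list pmf" where
  "history M H alg 0 = return_pmf []"
| "history M H alg (Suc t) =
     bind_pmf (history M H alg t) (\<lambda>h.
     bind_pmf (alg h) (\<lambda>\<pi>.
     bind_pmf (episode M H \<pi>) (\<lambda>r. return_pmf (h @ [(\<pi>, r)]))))"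

definition exp_regret :: "nat \<Rightarrow> nat \<Rightarrow> nat \<Rightarrow> mdp \<Rightarrow> algorithm \<Rightarrow> nat \<Rightarrow> real" where
  "exp_regret k H A M alg T =
     measure_pmf.expectation (history M H alg T)
       (\<lambda>h. \<Sum>p\<leftarrow>h. opt k H A M - pvalue M H (fst p))"

end

theory Submission
  imports Defs
begin


primrec hk :: "('x list \<Rightarrow> 'x pmf) \<Rightarrow> nat \<Rightarrow> 'x list pmf" where
  "hk K 0 = return_pmf []"
| "hk K (Suc t) = bind_pmf (hk K t) (\<lambda>h. bind_pmf (K h) (\<lambda>x. return_pmf (h @ [x])))"

definition Sx :: "'x set \<Rightarrow> nat \<Rightarrow> 'x list set" where
  "Sx X t = {h. set h \<subseteq> X \<and> length h = t}"

lemma finite_Sx: "finite X \<Longrightarrow> finite (Sx X t)"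
  unfolding Sx_def by (rule finite_lists_length_eq)

lemma supp_hk: assumes "\<And>h. set_pmf (K h) \<subseteq> X" shows "set_pmf (hk K t) \<subseteq> Sx X t"
proof (induction t)
  case 0 then show ?case by (simp add: Sx_def)
next
  case (Suc t) then show ?case using assms by (fastforce simp: Sx_def set_bind_pmf)
qed

lemma pmf_bind_inj:
  assumes inj: "\<And>a b a' b'. f a b = f a' b' \<Longrightarrow> a = a' \<and> b = b'"
  shows "pmf (bind_pmf p (\<lambda>a. bind_pmf (q a) (\<lambda>b. return_pmf (f a b)))) (f a b) = pmf p a * pmf (q a) b"
proof -
  have inner: "pmf (bind_pmf (q a') (\<lambda>b'. return_pmf (f a' b'))) (f a b) = (if a' = a then pmf (q a) b else 0)" for a'
  proof -
    have "pmf (bind_pmf (q a') (\<lambda>b'. return_pmf (f a' b'))) (f a b) = (\<integral>b'. indicator {f a b} (f a' b') \<partial>measure_pmf (q a'))"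
      by (simp add: pmf_bind)
    also have "\<dots> = (\<Sum>b'\<in>{b}. indicator {f a b} (f a' b') * pmf (q a') b')"
      by (rule integral_measure_pmf_real) (auto simp: indicator_def dest: inj)
    also have "\<dots> = indicator {f a b} (f a' b) * pmf (q a') b"
      by (simp only: sum.insert_if finite.emptyI empty_iff if_False sum.empty add_0_right)
    also have "\<dots> = (if a' = a then pmf (q a) b else 0)"
      using inj[of a' b a b] by (auto simp: indicator_def)
    finally show ?thesis .
  qed
  have "pmf (bind_pmf p (\<lambda>a. bind_pmf (q a) (\<lambda>b. return_pmf (f a b)))) (f a b)
      = (\<integral>a'. (if a' = a then pmf (q a) b else 0) \<partial>measure_pmf p)"
    by (simp add: pmf_bind[of p] inner)
  also have "\<dots> = (\<Sum>a'\<in>{a}. (if a' = a then pmf (q a) b else 0) * pmf p a')"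
    by (rule integral_measure_pmf_real) (auto split: if_splits)
  also have "\<dots> = pmf p a * pmf (q a) b" by simp
  finally show ?thesis .
qed

lemma pmf_hk_Suc: "pmf (hk K (Suc t)) (h @ [x]) = pmf (hk K t) h * pmf (K h) x"
  by (simp only: hk.simps) (rule pmf_bind_inj[where f="\<lambda>h x. h @ [x]"], simp)

lemma Sx_Suc: "Sx X (Suc t) = (\<lambda>(h,x). h @ [x]) ` (Sx X t \<times> X)"
proof
  show "Sx X (Suc t) \<subseteq> (\<lambda>(h,x). h @ [x]) ` (Sx X t \<times> X)"
  proof
    fix h' assume h': "h' \<in> Sx X (Suc t)"
    then have "h' \<noteq> []" by (auto simp: Sx_def)
    then have e: "h' = butlast h' @ [last h']" by simp
    have "butlast h' \<in> Sx X t" "last h' \<in> X" using h' \<open>h' \<noteq> []\<close>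
      by (auto simp: Sx_def dest: in_set_butlastD)
    then show "h' \<in> (\<lambda>(h,x). h @ [x]) ` (Sx X t \<times> X)" using e by force
  qed
qed (auto simp: Sx_def)

lemma sum_Sx_Suc: "(\<Sum>h'\<in>Sx X (Suc t). f h') = (\<Sum>h\<in>Sx X t. \<Sum>x\<in>X. f (h @ [x]))"
proof -
  have "inj_on (\<lambda>(h,x). h @ [x]) (Sx X t \<times> X)" by (auto simp: inj_on_def)
  then have "(\<Sum>h'\<in>Sx X (Suc t). f h') = (\<Sum>p\<in>Sx X t \<times> X. f ((\<lambda>(h,x). h @ [x]) p))"
    unfolding Sx_Suc by (rule sum.reindex_cong) auto
  also have "\<dots> = (\<Sum>h\<in>Sx X t. \<Sum>x\<in>X. f (h @ [x]))"
    by (simp add: sum.cartesian_product split_def)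
  finally show ?thesis .
qed

lemma exp_hk: assumes "finite X" "\<And>h. set_pmf (K h) \<subseteq> X"
  shows "measure_pmf.expectation (hk K t) f = (\<Sum>h\<in>Sx X t. pmf (hk K t) h * f h)"
proof -
  have s: "set_pmf (hk K t) \<subseteq> Sx X t" by (rule supp_hk) (rule assms(2))
  show ?thesis
    by (subst integral_measure_pmf_real[OF finite_Sx[OF assms(1)], where M="hk K t"])
       (use s in \<open>auto simp: mult.commute\<close>)
qed




lemma kl_term: fixes p q :: real assumes "0 \<le> p" "0 \<le> q" "p > 0 \<Longrightarrow> q > 0"
  shows "2 * (p - sqrt (p * q)) \<le> p * ln (p / q)"
proof (cases "p = 0")
  case True then show ?thesis by simp
next
  case False
  then have p: "p > 0" using assms by simp
  then have q: "q > 0" using assms by simp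
  define y where "y = sqrt (q / p)"
  have y: "y > 0" using p q by (simp add: y_def)
  have "ln (q / p) = 2 * ln y" using p q by (simp add: y_def ln_sqrt)
  also have "\<dots> \<le> 2 * (y - 1)" using ln_le_minus_one[OF y] by simp
  finally have l: "ln (q / p) \<le> 2 * (y - 1)" .
  have "ln (p / q) = - ln (q / p)" using p q by (simp add: ln_div)
  moreover have "p * y = sqrt (p * q)" using p q unfolding y_def
  proof -
    have "p * sqrt (q / p) = sqrt (p * p) * sqrt (q / p)" using p by simp
    also have "\<dots> = sqrt (p * p * (q / p))" by (rule real_sqrt_mult[symmetric])
    also have "p * p * (q / p) = p * q" using p by (simp add: field_simps)
    finally show "p * sqrt (q / p) = sqrt (p * q)" .
  qed
  moreover have "p * ln (q / p) \<le> p * (2 * (y - 1))" using l p by (intro mult_left_mono) auto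
  ultimately show ?thesis by (simp add: algebra_simps)
qed

lemma diff_term: fixes a b c t l :: real assumes "0 \<le> a" "0 \<le> b" "0 \<le> c" "c \<le> t" "l > 0"
  shows "(b^2 - a^2) * c \<le> l / 2 * (b - a)^2 + (a^2 + b^2) * t^2 / l"
proof -
  have 1: "(b - a) * ((a + b) * c) \<le> l / 2 * (b - a)^2 + ((a + b) * c)^2 / (2 * l)"
  proof -
    have "0 \<le> (l * (b - a) - (a + b) * c)^2 / (2 * l)" using assms by simp
    then show ?thesis using assms by (simp add: field_simps power2_eq_square)
  qed
  have 2: "((a + b) * c)^2 \<le> 2 * (a^2 + b^2) * t^2"
  proof -
    have "((a + b) * c)^2 = (a+b)^2 * c^2" by (simp add: power_mult_distrib)
    also have "\<dots> \<le> (a+b)^2 * t^2" using assms by (intro mult_left_mono power_mono) auto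
    also have "\<dots> \<le> 2 * (a^2 + b^2) * t^2"
    proof (intro mult_right_mono)
      have "0 \<le> (a - b)^2" by simp
      then show "(a + b)^2 \<le> 2 * (a^2 + b^2)" by (simp add: power2_eq_square algebra_simps)
    qed simp
    finally show ?thesis .
  qed
  have "(b^2 - a^2) * c = (b - a) * ((a + b) * c)" by (simp add: power2_eq_square algebra_simps)
  also have "\<dots> \<le> l / 2 * (b - a)^2 + ((a + b) * c)^2 / (2 * l)" by (rule 1)
  also have "((a + b) * c)^2 / (2 * l) \<le> 2 * (a^2 + b^2) * t^2 / (2 * l)"
    using 2 assms by (intro divide_right_mono) auto
  also have "2 * (a^2 + b^2) * t^2 / (2 * l) = (a^2 + b^2) * t^2 / l" using assms by (simp add: field_simps)
  finally show ?thesis by simp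
qed

definition cnt :: "('x \<Rightarrow> real) \<Rightarrow> 'x list \<Rightarrow> real" where
  "cnt \<phi> h = sum_list (map \<phi> h)"

lemma cnt_snoc: "cnt \<phi> (h @ [x]) = cnt \<phi> h + \<phi> x" by (simp add: cnt_def)

lemma cnt_bounds: "(\<And>x. x \<in> set h \<Longrightarrow> 0 \<le> \<phi> x \<and> \<phi> x \<le> 1) \<Longrightarrow> 0 \<le> cnt \<phi> h \<and> cnt \<phi> h \<le> length h"
proof (induction h)
  case (Cons a h)
  then have "0 \<le> \<phi> a" "\<phi> a \<le> 1" "0 \<le> cnt \<phi> h" "cnt \<phi> h \<le> length h" by auto
  then show ?case by (simp add: cnt_def)
qed (simp add: cnt_def)

context
  fixes X :: "'x set" and K0 K1 :: "'x list \<Rightarrow> 'x pmf" and \<phi> :: "'x \<Rightarrow> real" and \<kappa> :: real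
  assumes finX: "finite X" and s0: "\<And>h. set_pmf (K0 h) \<subseteq> X" and s1: "\<And>h. set_pmf (K1 h) \<subseteq> X"
  and pos: "\<And>h x. x \<in> X \<Longrightarrow> pmf (K0 h) x > 0 \<Longrightarrow> pmf (K1 h) x > 0"
  and phi: "\<And>x. x \<in> X \<Longrightarrow> 0 \<le> \<phi> x \<and> \<phi> x \<le> 1"
  and klstep: "\<And>h. (\<Sum>x\<in>X. pmf (K0 h) x * ln (pmf (K0 h) x / pmf (K1 h) x))
                     \<le> \<kappa> * (\<Sum>x\<in>X. pmf (K0 h) x * \<phi> x)"
begin

lemma sumK0: "(\<Sum>x\<in>X. pmf (K0 h) x) = 1" by (rule sum_pmf_eq_1[OF finX s0])

lemma sumP: "(\<Sum>h\<in>Sx X t. pmf (hk K0 t) h) = 1" "(\<Sum>h\<in>Sx X t. pmf (hk K1 t) h) = 1"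
  by (rule sum_pmf_eq_1[OF finite_Sx[OF finX] supp_hk], rule s0)+
     (rule sum_pmf_eq_1[OF finite_Sx[OF finX] supp_hk], rule s1)

lemma kl_chain:
  "(\<Sum>h\<in>Sx X t. pmf (hk K0 t) h * ln (pmf (hk K0 t) h / pmf (hk K1 t) h))
      \<le> \<kappa> * (\<Sum>h\<in>Sx X t. pmf (hk K0 t) h * cnt \<phi> h)
   \<and> (\<forall>h\<in>Sx X t. pmf (hk K0 t) h > 0 \<longrightarrow> pmf (hk K1 t) h > 0)"
proof (induction t)
  case 0
  show ?case by (simp add: Sx_def cnt_def)
next
  case (Suc t)
  define P0 where "P0 = pmf (hk K0 t)"
  define P1 where "P1 = pmf (hk K1 t)"
  define a where "a h = (\<Sum>x\<in>X. pmf (K0 h) x * \<phi> x)" for h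
  have IH1: "(\<Sum>h\<in>Sx X t. P0 h * ln (P0 h / P1 h)) \<le> \<kappa> * (\<Sum>h\<in>Sx X t. P0 h * cnt \<phi> h)"
    and IH2: "\<And>h. h \<in> Sx X t \<Longrightarrow> P0 h > 0 \<Longrightarrow> P1 h > 0"
    using Suc.IH by (auto simp: P0_def P1_def)
  have trm: "P0 h * pmf (K0 h) x * ln (P0 h * pmf (K0 h) x / (P1 h * pmf (K1 h) x))
     = P0 h * pmf (K0 h) x * ln (P0 h / P1 h) + P0 h * (pmf (K0 h) x * ln (pmf (K0 h) x / pmf (K1 h) x))"
    if "h \<in> Sx X t" "x \<in> X" for h x
  proof (cases "P0 h * pmf (K0 h) x = 0")
    case True then show ?thesis by auto
  next
    case False
    then have "P0 h > 0" "pmf (K0 h) x > 0" using pmf_nonneg[of "hk K0 t" h] pmf_nonneg[of "K0 h" x]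
      by (auto simp: P0_def order_less_le)
    moreover have "P1 h > 0" "pmf (K1 h) x > 0" using IH2 pos that calculation by auto
    ultimately show ?thesis by (simp add: ln_mult ln_div algebra_simps)
  qed
  have "(\<Sum>h'\<in>Sx X (Suc t). pmf (hk K0 (Suc t)) h' * ln (pmf (hk K0 (Suc t)) h' / pmf (hk K1 (Suc t)) h'))
      = (\<Sum>h\<in>Sx X t. \<Sum>x\<in>X. P0 h * pmf (K0 h) x * ln (P0 h * pmf (K0 h) x / (P1 h * pmf (K1 h) x)))"
    by (simp add: sum_Sx_Suc pmf_hk_Suc P0_def P1_def del: hk.simps)
  also have "\<dots> = (\<Sum>h\<in>Sx X t. P0 h * ln (P0 h / P1 h) * (\<Sum>x\<in>X. pmf (K0 h) x)
        + P0 h * (\<Sum>x\<in>X. pmf (K0 h) x * ln (pmf (K0 h) x / pmf (K1 h) x)))"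
  proof (intro sum.cong refl)
    fix h assume h: "h \<in> Sx X t"
    have "(\<Sum>x\<in>X. P0 h * pmf (K0 h) x * ln (P0 h * pmf (K0 h) x / (P1 h * pmf (K1 h) x)))
       = (\<Sum>x\<in>X. P0 h * ln (P0 h / P1 h) * pmf (K0 h) x + P0 h * (pmf (K0 h) x * ln (pmf (K0 h) x / pmf (K1 h) x)))"
      by (rule sum.cong) (simp_all add: trm[OF h] mult.commute mult.left_commute)
    also have "\<dots> = P0 h * ln (P0 h / P1 h) * (\<Sum>x\<in>X. pmf (K0 h) x)
        + P0 h * (\<Sum>x\<in>X. pmf (K0 h) x * ln (pmf (K0 h) x / pmf (K1 h) x))"
      by (simp add: sum.distrib sum_distrib_left)
    finally show "(\<Sum>x\<in>X. P0 h * pmf (K0 h) x * ln (P0 h * pmf (K0 h) x / (P1 h * pmf (K1 h) x)))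
       = P0 h * ln (P0 h / P1 h) * (\<Sum>x\<in>X. pmf (K0 h) x)
        + P0 h * (\<Sum>x\<in>X. pmf (K0 h) x * ln (pmf (K0 h) x / pmf (K1 h) x))" .
  qed
  also have "\<dots> \<le> (\<Sum>h\<in>Sx X t. P0 h * ln (P0 h / P1 h) + P0 h * (\<kappa> * a h))"
    unfolding sumK0 a_def
    by (intro sum_mono add_left_mono) (simp add: P0_def mult_left_mono klstep)
  also have "\<dots> \<le> \<kappa> * (\<Sum>h\<in>Sx X t. P0 h * cnt \<phi> h) + \<kappa> * (\<Sum>h\<in>Sx X t. P0 h * a h)"
    using IH1 by (simp add: sum.distrib sum_distrib_left algebra_simps)
  also have "\<dots> = \<kappa> * (\<Sum>h'\<in>Sx X (Suc t). pmf (hk K0 (Suc t)) h' * cnt \<phi> h')"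
  proof -
    have "(\<Sum>h'\<in>Sx X (Suc t). pmf (hk K0 (Suc t)) h' * cnt \<phi> h')
        = (\<Sum>h\<in>Sx X t. \<Sum>x\<in>X. P0 h * pmf (K0 h) x * (cnt \<phi> h + \<phi> x))"
      by (simp add: sum_Sx_Suc pmf_hk_Suc P0_def cnt_snoc del: hk.simps)
    also have "\<dots> = (\<Sum>h\<in>Sx X t. P0 h * cnt \<phi> h * (\<Sum>x\<in>X. pmf (K0 h) x) + P0 h * a h)"
      by (intro sum.cong refl) (simp add: a_def sum.distrib sum_distrib_left sum_distrib_right algebra_simps)
    finally show ?thesis by (simp add: sumK0 sum.distrib algebra_simps)
  qed
  finally have A: "(\<Sum>h'\<in>Sx X (Suc t). pmf (hk K0 (Suc t)) h' * ln (pmf (hk K0 (Suc t)) h' / pmf (hk K1 (Suc t)) h'))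
      \<le> \<kappa> * (\<Sum>h'\<in>Sx X (Suc t). pmf (hk K0 (Suc t)) h' * cnt \<phi> h')" .
  have B: "\<forall>h'\<in>Sx X (Suc t). pmf (hk K0 (Suc t)) h' > 0 \<longrightarrow> pmf (hk K1 (Suc t)) h' > 0"
  proof (intro ballI impI)
    fix h' assume h': "h' \<in> Sx X (Suc t)" and p: "pmf (hk K0 (Suc t)) h' > 0"
    from h' obtain h x where hx: "h \<in> Sx X t" "x \<in> X" "h' = h @ [x]" unfolding Sx_Suc by auto
    have "P0 h * pmf (K0 h) x > 0" using p hx by (simp add: pmf_hk_Suc P0_def del: hk.simps)
    then have "P0 h > 0" "pmf (K0 h) x > 0" using pmf_nonneg[of "hk K0 t" h] pmf_nonneg[of "K0 h" x]
      by (auto simp: P0_def zero_less_mult_iff)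
    then have "P1 h > 0" "pmf (K1 h) x > 0" using IH2 pos hx by auto
    then show "pmf (hk K1 (Suc t)) h' > 0" using hx by (simp add: pmf_hk_Suc P1_def del: hk.simps)
  qed
  show ?case using A B by blast
qed

lemma exp_bound:
  assumes l: "l > 0"
  shows "(\<Sum>h\<in>Sx X t. pmf (hk K1 t) h * cnt \<phi> h)
     \<le> (\<Sum>h\<in>Sx X t. pmf (hk K0 t) h * cnt \<phi> h) * (1 + l * \<kappa> / 2) + 2 * (real t)^2 / l"
proof -
  define P0 where "P0 = pmf (hk K0 t)"
  define P1 where "P1 = pmf (hk K1 t)"
  define S where "S = Sx X t"
  define BC where "BC = (\<Sum>h\<in>S. sqrt (P0 h * P1 h))"
  have S1: "sum P0 S = 1" "sum P1 S = 1" using sumP unfolding P0_def P1_def S_def by auto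
  note kc = kl_chain[of t]
  have KL: "(\<Sum>h\<in>S. P0 h * ln (P0 h / P1 h)) \<le> \<kappa> * (\<Sum>h\<in>S. P0 h * cnt \<phi> h)"
    using kc unfolding P0_def P1_def S_def by blast
  have posi: "P1 h > 0" if "h \<in> S" "P0 h > 0" for h
    using kc that unfolding P0_def P1_def S_def by blast
  have "2 * (1 - BC) = (\<Sum>h\<in>S. 2 * (P0 h - sqrt (P0 h * P1 h)))"
    by (simp add: BC_def S1 sum_subtractf sum_distrib_left[symmetric])
  also have "\<dots> \<le> (\<Sum>h\<in>S. P0 h * ln (P0 h / P1 h))"
    by (intro sum_mono kl_term) (auto simp: P0_def P1_def intro: posi[unfolded P0_def P1_def])
  finally have KL2: "2 * (1 - BC) \<le> \<kappa> * (\<Sum>h\<in>S. P0 h * cnt \<phi> h)" using KL by linarith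
  have cb: "0 \<le> cnt \<phi> h \<and> cnt \<phi> h \<le> real t" if "h \<in> S" for h
    using cnt_bounds[of h \<phi>] phi that by (auto simp: S_def Sx_def)
  have "(\<Sum>h\<in>S. P1 h * cnt \<phi> h) - (\<Sum>h\<in>S. P0 h * cnt \<phi> h)
      = (\<Sum>h\<in>S. ((sqrt (P1 h))^2 - (sqrt (P0 h))^2) * cnt \<phi> h)"
    by (simp add: sum_subtractf[symmetric] algebra_simps P0_def P1_def)
  also have "\<dots> \<le> (\<Sum>h\<in>S. l / 2 * (sqrt (P1 h) - sqrt (P0 h))^2
                     + ((sqrt (P0 h))^2 + (sqrt (P1 h))^2) * (real t)^2 / l)"
    by (intro sum_mono diff_term) (use cb l in \<open>auto simp: P0_def P1_def\<close>)
  also have "\<dots> = (\<Sum>h\<in>S. l / 2 * (P1 h + P0 h - 2 * sqrt (P0 h * P1 h))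
                     + (P0 h + P1 h) * (real t)^2 / l)"
    by (intro sum.cong refl)
       (simp add: P0_def P1_def power2_eq_square algebra_simps real_sqrt_mult)
  also have "\<dots> = l / 2 * (2 - 2 * BC) + 2 * (real t)^2 / l"
    by (simp add: sum.distrib sum_subtractf sum_distrib_left[symmetric] sum_divide_distrib[symmetric]
        sum_distrib_right[symmetric] S1 BC_def)
  also have "\<dots> = l * (1 - BC) + 2 * (real t)^2 / l" by (simp add: algebra_simps)
  also have "\<dots> \<le> l * (\<kappa> * (\<Sum>h\<in>S. P0 h * cnt \<phi> h) / 2) + 2 * (real t)^2 / l"
    using KL2 l by (intro add_right_mono mult_left_mono) auto
  finally show ?thesis unfolding P0_def P1_def S_def by (simp add: algebra_simps)
qed

end




definition coin :: "real \<Rightarrow> real pmf" where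
  "coin q = map_pmf (\<lambda>b. if b then 1 else 0) (bernoulli_pmf q)"

lemma inj_coinf: "inj (\<lambda>b::bool. if b then 1 else (0::real))"
  by (auto simp: inj_def split: if_splits)

lemma pmf_coin1: "0 \<le> q \<Longrightarrow> q \<le> 1 \<Longrightarrow> pmf (coin q) 1 = q"
  using pmf_map_inj'[OF inj_coinf, of "bernoulli_pmf q" True] by (simp add: coin_def)

lemma pmf_coin0: "0 \<le> q \<Longrightarrow> q \<le> 1 \<Longrightarrow> pmf (coin q) 0 = 1 - q"
  using pmf_map_inj'[OF inj_coinf, of "bernoulli_pmf q" False] by (simp add: coin_def)

lemma set_coin: "set_pmf (coin q) \<subseteq> {0, 1}"
  by (auto simp: coin_def)

lemma coin_mem: "x \<in> set_pmf (coin q) \<Longrightarrow> x = 0 \<or> x = 1"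
  using set_coin by blast

lemma exp_coin: "0 \<le> q \<Longrightarrow> q \<le> 1 \<Longrightarrow> measure_pmf.expectation (coin q) (\<lambda>x. x) = q"
  by (subst integral_measure_pmf_real[where A="{0,1}"]) (use set_coin in \<open>auto simp: pmf_coin1\<close>)

definition mkM :: "nat \<Rightarrow> (nat \<Rightarrow> nat) \<Rightarrow> real \<Rightarrow> mdp" where
  "mkM H w e = \<lparr> trans = (\<lambda>i l a. return_pmf (if l = 0 \<and> a = w i then 0 else 1)),
                 rew = (\<lambda>l i a. if Suc i = H then coin (1/2 + (if l = 0 \<and> a = w i then e else 0))
                               else return_pmf 0) \<rparr>"

lemma run_mkM:
  "i + n = H \<Longrightarrow> 0 < n \<Longrightarrow> run (mkM H w e) \<pi> n l i
     = coin (1/2 + (if l = 0 \<and> (\<forall>j. i \<le> j \<and> j < H \<longrightarrow> \<pi> 0 j = w j) then e else 0))"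
proof (induction n arbitrary: l i)
  case 0 then show ?case by simp
next
  case (Suc n)
  show ?case
  proof (cases n)
    case 0
    with Suc.prems have H: "H = Suc i" by simp
    have c: "(l = 0 \<and> \<pi> l i = w i) = (l = 0 \<and> (\<forall>j. i \<le> j \<and> j < H \<longrightarrow> \<pi> 0 j = w j))"
      using H by (auto simp: le_less_Suc_eq)
    show ?thesis using 0 H c by (simp add: mkM_def bind_return_pmf bind_return_pmf')
  next
    case (Suc m)
    with Suc.prems have H: "Suc i \<noteq> H" "Suc i + n = H" "0 < n" by auto
    define s where "s = (if l = 0 \<and> \<pi> l i = w i then 0 else (1::nat))"
    have c: "(s = 0 \<and> (\<forall>j. Suc i \<le> j \<and> j < H \<longrightarrow> \<pi> 0 j = w j))
           = (l = 0 \<and> (\<forall>j. i \<le> j \<and> j < H \<longrightarrow> \<pi> 0 j = w j))"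
      using H unfolding s_def by (auto simp: Suc_le_eq) (metis le_neq_implies_less)
    have "run (mkM H w e) \<pi> (Suc n) l i = run (mkM H w e) \<pi> n s (Suc i)"
      using H by (simp add: mkM_def s_def bind_return_pmf bind_return_pmf')
    also have "\<dots> = coin (1/2 + (if s = 0 \<and> (\<forall>j. Suc i \<le> j \<and> j < H \<longrightarrow> \<pi> 0 j = w j) then e else 0))"
      by (rule Suc.IH) (use H in auto)
    finally show ?thesis using c by simp
  qed
qed

lemma episode_mkM: "0 < H \<Longrightarrow> episode (mkM H w e) H \<pi> = coin (1/2 + (if \<forall>j<H. \<pi> 0 j = w j then e else 0))"
  unfolding episode_def by (subst run_mkM) auto

lemma pvalue_mkM: "0 < H \<Longrightarrow> 0 \<le> e \<Longrightarrow> e \<le> 1/2 \<Longrightarrow>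
   pvalue (mkM H w e) H \<pi> = 1/2 + (if \<forall>j<H. \<pi> 0 j = w j then e else 0)"
  unfolding pvalue_def episode_mkM by (subst exp_coin) auto

lemma valid_mkM: assumes "0 < H" "0 \<le> e" "e \<le> 1/2" shows "valid_mdp 2 H A (mkM H w e)"
  unfolding valid_mdp_def
proof (intro conjI allI impI)
  fix i l a :: nat assume "i + 1 < H \<and> l < 2 \<and> a < A"
  then show "set_pmf (trans (mkM H w e) i l a) \<subseteq> {..<2}" by (simp add: mkM_def)
next
  fix l i a :: nat and x :: real assume "l < 2 \<and> i < H \<and> a < A \<and> x \<in> set_pmf (rew (mkM H w e) l i a)"
  then show "0 \<le> x" by (auto simp: mkM_def split: if_splits dest!: coin_mem)
next
  fix ls as xs
  assume a: "\<forall>i<H. ls i < 2 \<and> as i < A \<and> xs i \<in> set_pmf (rew (mkM H w e) (ls i) i (as i))"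
  obtain m where m: "H = Suc m" using assms by (cases H) auto
  have z: "xs i = 0" if "i < m" for i
  proof -
    have "i < H" "Suc i \<noteq> H" using that m by auto
    then show ?thesis using a by (auto simp: mkM_def)
  qed
  have "xs m \<in> set_pmf (rew (mkM H w e) (ls m) m (as m))" using a m by auto
  then have "xs m \<in> {0,1}" using m by (auto simp: mkM_def dest!: coin_mem)
  then show "(\<Sum>i<H. xs i) \<le> 1" using z m by auto
qed

definition Wset :: "nat \<Rightarrow> nat \<Rightarrow> (nat \<Rightarrow> nat) set" where
  "Wset H A = {w. \<forall>i. (i < H \<longrightarrow> w i < A) \<and> (\<not> i < H \<longrightarrow> w i = 0)}"

lemma card_Wset: "card (Wset H A) = A ^ H"
proof -
  have "bij_betw (\<lambda>f i. if i < H then f i else 0) (PiE {..<H} (\<lambda>_. {..<A})) (Wset H A)"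
  proof (rule bij_betwI')
    fix f g assume "f \<in> PiE {..<H} (\<lambda>_. {..<A})" "g \<in> PiE {..<H} (\<lambda>_. {..<A})"
    then show "((\<lambda>i. if i < H then f i else 0) = (\<lambda>i. if i < H then g i else 0)) = (f = g)"
      by (auto simp: PiE_def extensional_def fun_eq_iff) metis
  next
    fix f assume "f \<in> PiE {..<H} (\<lambda>_. {..<A})"
    then show "(\<lambda>i. if i < H then f i else 0) \<in> Wset H A" by (auto simp: Wset_def)
  next
    fix w assume w: "w \<in> Wset H A"
    show "\<exists>f\<in>PiE {..<H} (\<lambda>_. {..<A}). w = (\<lambda>i. if i < H then f i else 0)"
      by (rule bexI[of _ "restrict w {..<H}"]) (use w in \<open>auto simp: Wset_def fun_eq_iff\<close>)
  qed
  then have "card (Wset H A) = card (PiE {..<H} (\<lambda>_. {..<A}::nat set))"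
    by (simp add: bij_betw_same_card)
  also have "\<dots> = A ^ H" by (simp add: card_PiE)
  finally show ?thesis .
qed

lemma finite_policies: "finite (policies k H A)"
proof -
  have "policies k H A \<subseteq> (\<lambda>f l i. if l < k \<and> i < H then f (l, i) else 0) `
           PiE ({..<k} \<times> {..<H}) (\<lambda>_. {..<A})"
  proof
    fix \<pi> assume p: "\<pi> \<in> policies k H A"
    show "\<pi> \<in> (\<lambda>f l i. if l < k \<and> i < H then f (l, i) else 0) ` PiE ({..<k} \<times> {..<H}) (\<lambda>_. {..<A})"
      by (rule image_eqI[of _ _ "restrict (\<lambda>(l,i). \<pi> l i) ({..<k} \<times> {..<H})"])
         (use p in \<open>auto simp: policies_def fun_eq_iff\<close>)
  qed
  moreover have "finite (PiE ({..<k} \<times> {..<H}) (\<lambda>_. {..<A::nat}))" by (intro finite_PiE) auto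
  ultimately show ?thesis by (rule finite_subset[OF _ finite_imageI])
qed

lemma opt_mkM: assumes "0 < H" "0 \<le> e" "e \<le> 1/2" "w \<in> Wset H A"
  shows "opt 2 H A (mkM H w e) = 1/2 + e"
  unfolding opt_def
proof (rule Max_eqI)
  show "finite (pvalue (mkM H w e) H ` policies 2 H A)" by (simp add: finite_policies)
next
  fix y assume "y \<in> pvalue (mkM H w e) H ` policies 2 H A"
  then show "y \<le> 1/2 + e" using assms by (auto simp: pvalue_mkM)
next
  define \<pi> where "\<pi> = (\<lambda>l::nat. \<lambda>i::nat. if l = 0 \<and> i < H then w i else (0::nat))"
  have "\<pi> \<in> policies 2 H A" using assms(4) by (auto simp: policies_def \<pi>_def Wset_def)
  moreover have "pvalue (mkM H w e) H \<pi> = 1/2 + e" using assms by (simp add: pvalue_mkM \<pi>_def)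
  ultimately show "1/2 + e \<in> pvalue (mkM H w e) H ` policies 2 H A" by force
qed




definition Kof :: "((nat \<Rightarrow> nat \<Rightarrow> nat) \<Rightarrow> real pmf) \<Rightarrow> algorithm \<Rightarrow> ((nat \<Rightarrow> nat \<Rightarrow> nat) \<times> real) list
   \<Rightarrow> ((nat \<Rightarrow> nat \<Rightarrow> nat) \<times> real) pmf" where
  "Kof \<nu> alg h = bind_pmf (alg h) (\<lambda>\<pi>. bind_pmf (\<nu> \<pi>) (\<lambda>r. return_pmf (\<pi>, r)))"

lemma history_hk: "history M H alg t = hk (Kof (episode M H) alg) t"
  by (induction t) (simp_all add: Kof_def bind_assoc_pmf bind_return_pmf)

lemma pmf_Kof: "pmf (Kof \<nu> alg h) (\<pi>, r) = pmf (alg h) \<pi> * pmf (\<nu> \<pi>) r"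
  unfolding Kof_def by (rule pmf_bind_inj[where f=Pair]) simp

lemma supp_Kof: "set_pmf (alg h) \<subseteq> P \<Longrightarrow> (\<And>\<pi>. set_pmf (\<nu> \<pi>) \<subseteq> R) \<Longrightarrow> set_pmf (Kof \<nu> alg h) \<subseteq> P \<times> R"
  unfolding Kof_def by (auto simp: set_bind_pmf)

lemma sum_times_split: "(\<Sum>x\<in>A \<times> B. F x) = (\<Sum>a\<in>A. \<Sum>b\<in>B. F (a, b))"
  by (simp add: sum.cartesian_product split_def)

definition kap :: "real \<Rightarrow> real" where
  "kap e = (ln (1 / (1 + 2 * e)) + ln (1 / (1 - 2 * e))) / 2"

lemma kap_bound: assumes "0 \<le> e" "e \<le> 1/4" shows "kap e \<le> 8 * e^2 / 3"
proof -
  have p1: "0 < 1 + 2 * e" "0 < 1 - 2 * e" using assms by auto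
  have "e * e \<le> (1/4) * (1/4)" using assms by (intro mult_mono) auto
  then have e2: "e^2 \<le> 1/16" by (simp add: power2_eq_square)
  have "ln (1 / (1 + 2 * e)) + ln (1 / (1 - 2 * e)) = ln (1 / ((1 + 2 * e) * (1 - 2 * e)))"
    using p1 by (simp add: ln_div ln_mult)
  also have "(1 + 2 * e) * (1 - 2 * e) = 1 - 4 * e^2" by (simp add: algebra_simps power2_eq_square)
  also have "ln (1 / (1 - 4 * e^2)) \<le> 1 / (1 - 4 * e^2) - 1"
  proof (rule ln_le_minus_one)
    show "0 < 1 / (1 - 4 * e^2)" using e2 by simp
  qed
  also have "1 / (1 - 4 * e^2) - 1 = 4 * e^2 / (1 - 4 * e^2)"
  proof -
    have "1 - 4 * e^2 \<noteq> 0" using e2 by simp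
    then show ?thesis by (simp add: field_simps)
  qed
  also have "\<dots> \<le> 4 * e^2 / (3/4)"
  proof -
    have "3/4 \<le> 1 - 4 * e^2" using e2 by simp
    then show ?thesis by (intro divide_left_mono) auto
  qed
  finally show ?thesis unfolding kap_def by simp
qed

lemma klstep_app:
  fixes G :: "(nat \<Rightarrow> nat \<Rightarrow> nat) \<Rightarrow> bool" and e :: real
  assumes e: "0 \<le> e" "e \<le> 1/4"
  defines "\<nu>1 \<equiv> (\<lambda>\<pi>. coin (1/2 + (if G \<pi> then e else 0)))"
  shows "(\<Sum>x\<in>P \<times> {0,1}. pmf (Kof (\<lambda>_. coin (1/2)) alg h) x
            * ln (pmf (Kof (\<lambda>_. coin (1/2)) alg h) x / pmf (Kof \<nu>1 alg h) x))
       \<le> kap e * (\<Sum>x\<in>P \<times> {0,1}. pmf (Kof (\<lambda>_. coin (1/2)) alg h) x * (if G (fst x) then 1 else 0))"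
proof -
  have i1: "(1/2) / (1/2 + e) = 1 / (1 + 2 * e)" "(1/2) / (1 - (1/2 + e)) = 1 / (1 - 2 * e)"
    using e by (auto simp: field_simps)
  have L: "(\<Sum>r\<in>{0,1}. pmf (alg h) \<pi> * pmf (coin (1/2)) r
            * ln (pmf (alg h) \<pi> * pmf (coin (1/2)) r / (pmf (alg h) \<pi> * pmf (\<nu>1 \<pi>) r)))
          = kap e * (\<Sum>r\<in>{0,1}. pmf (alg h) \<pi> * pmf (coin (1/2)) r * (if G \<pi> then 1 else 0))" for \<pi>
  proof (cases "pmf (alg h) \<pi> = 0")
    case True then show ?thesis by simp
  next
    case False
    have c: "pmf (\<nu>1 \<pi>) 1 = 1/2 + (if G \<pi> then e else 0)" "pmf (\<nu>1 \<pi>) 0 = 1 - (1/2 + (if G \<pi> then e else 0))"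
      using e unfolding \<nu>1_def by (auto simp: pmf_coin1 pmf_coin0)
    show ?thesis using False e
      by (simp add: c pmf_coin1 pmf_coin0 kap_def i1 algebra_simps add_divide_distrib[symmetric])
  qed
  have "(\<Sum>x\<in>P \<times> {0,1}. pmf (Kof (\<lambda>_. coin (1/2)) alg h) x
            * ln (pmf (Kof (\<lambda>_. coin (1/2)) alg h) x / pmf (Kof \<nu>1 alg h) x))
      = (\<Sum>\<pi>\<in>P. \<Sum>r\<in>{0,1}. pmf (alg h) \<pi> * pmf (coin (1/2)) r
            * ln (pmf (alg h) \<pi> * pmf (coin (1/2)) r / (pmf (alg h) \<pi> * pmf (\<nu>1 \<pi>) r)))"
    unfolding sum_times_split pmf_Kof by (rule refl)
  also have "\<dots> = (\<Sum>\<pi>\<in>P. kap e * (\<Sum>r\<in>{0,1}. pmf (alg h) \<pi> * pmf (coin (1/2)) r * (if G \<pi> then 1 else 0)))"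
    by (simp only: L)
  also have "\<dots> = kap e * (\<Sum>x\<in>P \<times> {0,1}. pmf (Kof (\<lambda>_. coin (1/2)) alg h) x * (if G (fst x) then 1 else 0))"
    unfolding sum_times_split pmf_Kof by (simp add: sum_distrib_left)
  finally show ?thesis by simp
qed




lemma sum_list_lin: "(\<And>p. p \<in> set h \<Longrightarrow> F p = e * (1 - \<phi> p)) \<Longrightarrow>
    sum_list (map F h) = e * (real (length h) - cnt \<phi> h)"
  by (induction h) (auto simp: cnt_def algebra_simps)

lemma sum_list_swap: "finite W \<Longrightarrow> (\<Sum>w\<in>W. cnt (f w) h) = sum_list (map (\<lambda>x. \<Sum>w\<in>W. f w x) h)"
  by (induction h) (auto simp: cnt_def sum.distrib)

lemma final_arith:
  fixes N T e k :: real
  assumes N: "N \<ge> 2" and T: "T > 0" and e: "e = min (1/4) (sqrt (N * T) / (16 * T))"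
    and k: "k \<le> 8 * e^2 / 3"
  shows "N * (1/64 * min (sqrt (N * T)) T) \<le> e * (N * T - T * (1 + 8 * T * k) - N * T / 8)"
proof -
  have e0: "0 \<le> e" using e T N by simp
  have e1: "e \<le> sqrt (N * T) / (16 * T)" using e by simp
  have "e^2 \<le> (sqrt (N * T) / (16 * T))^2" using e0 e1 by (intro power_mono) auto
  also have "\<dots> = N * T / (256 * T^2)" using N T by (simp add: power_divide power_mult_distrib)
  also have "\<dots> = N / (256 * T)" using T by (simp add: power2_eq_square)
  finally have "e^2 \<le> N / (256 * T)" .
  then have e2T: "e^2 * T \<le> N / 256" using T by (simp add: field_simps)
  have "8 * T * k * T \<le> 8 * T * (8 * e^2 / 3) * T" using k T by (intro mult_right_mono mult_left_mono) auto
  also have "\<dots> = 64 / 3 * (e^2 * T) * T" by (simp add: algebra_simps)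
  also have "\<dots> \<le> 64 / 3 * (N / 256) * T" using e2T T by (intro mult_right_mono mult_left_mono) auto
  finally have kk: "8 * T * k * T \<le> N * T / 12" by simp
  have "T \<le> N * T / 2" using N T by simp
  moreover have "T * (1 + 8 * T * k) = T + 8 * T * k * T" by (simp add: algebra_simps)
  moreover have "0 \<le> N * T" using N T by simp
  ultimately have br: "N * T / 4 \<le> N * T - T * (1 + 8 * T * k) - N * T / 8" using kk by linarith
  have eT: "min (sqrt (N * T)) T / 16 \<le> e * T"
  proof (cases "1/4 \<le> sqrt (N * T) / (16 * T)")
    case True
    then have "e = 1/4" using e by simp
    then have "e * T = T / 4" by simp
    moreover have "min (sqrt (N * T)) T \<le> T" by simp
    ultimately show ?thesis using T by linarith
  next
    case False
    then have "e = sqrt (N * T) / (16 * T)" using e by simp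
    then have "e * T = sqrt (N * T) / 16" using T by simp
    then show ?thesis by simp
  qed
  have "N * (1/64 * min (sqrt (N * T)) T) = (N / 4) * (min (sqrt (N * T)) T / 16)" by simp
  also have "\<dots> \<le> (N / 4) * (e * T)" using eT N by (intro mult_left_mono) auto
  also have "\<dots> = e * (N * T / 4)" by simp
  also have "\<dots> \<le> e * (N * T - T * (1 + 8 * T * k) - N * T / 8)" using br e0 by (intro mult_left_mono) auto
  finally show ?thesis .
qed

lemma sum_list_ones: "(\<And>x. x \<in> set h \<Longrightarrow> f x = (1::real)) \<Longrightarrow> sum_list (map f h) = real (length h)"
  by (induction h) auto

lemma main_pos:
  fixes H A T :: nat and alg :: algorithm
  assumes H: "1 \<le> H" and A: "2 \<le> A" and sup: "\<And>h. set_pmf (alg h) \<subseteq> policies 2 H A" and T: "0 < T"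
  shows "\<exists>M. valid_mdp 2 H A M \<and> 1/64 * min (sqrt (real A ^ H * real T)) (real T) \<le> exp_regret 2 H A M alg T"
proof -
  define Pol where "Pol = policies 2 H A"
  define X where "X = Pol \<times> {0::real, 1}"
  define W where "W = Wset H A"
  define N where "N = real A ^ H"
  define e where "e = min (1/4) (sqrt (N * real T) / (16 * real T))"
  define \<kappa> where "\<kappa> = kap e"
  define G where "G w \<pi> = (\<forall>j<H. \<pi> 0 j = w j)" for w :: "nat \<Rightarrow> nat" and \<pi> :: "nat \<Rightarrow> nat \<Rightarrow> nat"
  define \<phi> where "\<phi> w z = (if G w (fst z) then 1 else (0::real))" for w and z :: "(nat \<Rightarrow> nat \<Rightarrow> nat) \<times> real"
  define K0 where "K0 = Kof (\<lambda>_. coin (1/2)) alg"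
  define K1 where "K1 w = Kof (\<lambda>\<pi>. coin (1/2 + (if G w \<pi> then e else 0))) alg" for w
  define x where "x w = (\<Sum>h\<in>Sx X T. pmf (hk (K1 w) T) h * cnt (\<phi> w) h)" for w
  define y where "y w = (\<Sum>h\<in>Sx X T. pmf (hk K0 T) h * cnt (\<phi> w) h)" for w
  have p1: "real A ^ 1 \<le> real A ^ H" using A H by (intro power_increasing) auto
  have a2: "(2::real) \<le> real A" using A by simp
  have p2: "real A \<le> real A ^ H" using p1 by (simp only: power_one_right)
  have N2: "N \<ge> 2" unfolding N_def using a2 p2 by linarith
  have cardW: "card W = A ^ H" by (simp add: W_def card_Wset)
  then have finW: "finite W" and neW: "W \<noteq> {}" using A by (auto intro: card_ge_0_finite)
  have NW: "real (card W) = N" by (simp add: cardW N_def)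
  have "0 < sqrt (N * real T) / (16 * real T)" using N2 T by simp
  then have e0: "0 < e" "e \<le> 1/4" by (auto simp: e_def)
  have finX: "finite X" by (simp add: X_def Pol_def finite_policies)
  have sK0: "set_pmf (K0 h) \<subseteq> X" for h
    unfolding K0_def X_def Pol_def by (rule supp_Kof[OF sup set_coin])
  have sK1: "set_pmf (K1 w h) \<subseteq> X" for w h
    unfolding K1_def X_def Pol_def by (rule supp_Kof[OF sup set_coin])
  have ep: "episode (mkM H w e) H = (\<lambda>\<pi>. coin (1/2 + (if G w \<pi> then e else 0)))" for w
    using H by (auto simp: episode_mkM G_def fun_eq_iff)
  have phi: "0 \<le> \<phi> w z \<and> \<phi> w z \<le> 1" if "z \<in> X" for w z by (simp add: \<phi>_def)
  have pos: "pmf (K1 w h) z > 0" if zX: "z \<in> X" and zp: "pmf (K0 h) z > 0" for w h z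
  proof -
    obtain \<pi> r where z: "z = (\<pi>, r)" "r = 0 \<or> r = 1" using zX by (auto simp: X_def)
    have "pmf (alg h) \<pi> * pmf (coin (1/2)) r > 0" using zp z by (simp add: K0_def pmf_Kof)
    then have a: "pmf (alg h) \<pi> > 0" using pmf_nonneg[of "alg h" \<pi>] pmf_nonneg[of "coin (1/2)" r]
      by (auto simp: zero_less_mult_iff)
    have "pmf (coin (1/2 + (if G w \<pi> then e else 0))) r > 0"
      using z(2) e0 by (auto simp: pmf_coin0 pmf_coin1)
    then show ?thesis using a z by (simp add: K1_def pmf_Kof)
  qed
  have kl: "(\<Sum>z\<in>X. pmf (K0 h) z * ln (pmf (K0 h) z / pmf (K1 w h) z))
            \<le> \<kappa> * (\<Sum>z\<in>X. pmf (K0 h) z * \<phi> w z)" for w h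
    using klstep_app[where G="G w" and e=e and P=Pol and alg=alg and h=h] e0 unfolding X_def K0_def K1_def \<phi>_def \<kappa>_def by simp
  have bound: "x w \<le> y w * (1 + 8 * real T * \<kappa>) + real T / 8" for w
  proof -
    have "x w \<le> y w * (1 + 16 * real T * \<kappa> / 2) + 2 * (real T)^2 / (16 * real T)"
      unfolding x_def y_def
      by (rule exp_bound[OF finX sK0 sK1 pos phi kl]) (use T in auto)
    also have "16 * real T * \<kappa> / 2 = 8 * real T * \<kappa>" by simp
    also have "2 * (real T)^2 / (16 * real T) = real T / 8" using T by (simp add: power2_eq_square)
    finally show ?thesis .
  qed
  have regret: "exp_regret 2 H A (mkM H w e) alg T = e * (real T - x w)" if w: "w \<in> W" for w
  proof -
    have opt: "opt 2 H A (mkM H w e) = 1/2 + e" using opt_mkM[of H e w A] H e0 w by (simp add: W_def)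
    have pv: "pvalue (mkM H w e) H \<pi> = 1/2 + (if G w \<pi> then e else 0)" for \<pi>
      using pvalue_mkM[of H e w \<pi>] H e0 by (simp add: G_def)
    have sP: "set_pmf (hk (K1 w) T) \<subseteq> Sx X T" by (rule supp_hk) (rule sK1)
    have S1: "(\<Sum>h\<in>Sx X T. pmf (hk (K1 w) T) h) = 1" by (rule sum_pmf_eq_1[OF finite_Sx[OF finX] sP])
    have "exp_regret 2 H A (mkM H w e) alg T
        = measure_pmf.expectation (hk (K1 w) T) (\<lambda>h. \<Sum>p\<leftarrow>h. opt 2 H A (mkM H w e) - pvalue (mkM H w e) H (fst p))"
      unfolding exp_regret_def history_hk ep K1_def by (rule refl)
    also have "\<dots> = (\<Sum>h\<in>Sx X T. pmf (hk (K1 w) T) h * (\<Sum>p\<leftarrow>h. opt 2 H A (mkM H w e) - pvalue (mkM H w e) H (fst p)))"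
      by (rule exp_hk[OF finX sK1])
    also have "\<dots> = (\<Sum>h\<in>Sx X T. pmf (hk (K1 w) T) h * (e * (real T - cnt (\<phi> w) h)))"
    proof (intro sum.cong refl)
      fix h assume h: "h \<in> Sx X T"
      have "(\<Sum>p\<leftarrow>h. opt 2 H A (mkM H w e) - pvalue (mkM H w e) H (fst p)) = e * (real (length h) - cnt (\<phi> w) h)"
        by (rule sum_list_lin) (simp add: opt pv \<phi>_def)
      then show "pmf (hk (K1 w) T) h * (\<Sum>p\<leftarrow>h. opt 2 H A (mkM H w e) - pvalue (mkM H w e) H (fst p))
          = pmf (hk (K1 w) T) h * (e * (real T - cnt (\<phi> w) h))" using h by (simp add: Sx_def)
    qed
    also have "\<dots> = e * (real T * (\<Sum>h\<in>Sx X T. pmf (hk (K1 w) T) h) - x w)"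
      by (simp add: x_def sum_distrib_left sum_distrib_right sum_subtractf algebra_simps)
    finally show ?thesis using S1 by simp
  qed
  have sumy: "(\<Sum>w\<in>W. y w) = real T"
  proof -
    have one: "(\<Sum>w\<in>W. \<phi> w z) = 1" if "z \<in> X" for z
    proof -
      obtain \<pi> r where z: "z = (\<pi>, r)" "\<pi> \<in> Pol" using \<open>z \<in> X\<close> by (auto simp: X_def)
      have p0: "\<pi> 0 \<in> W" using z(2) by (auto simp: W_def Wset_def Pol_def policies_def)
      have "G w \<pi> = (w = \<pi> 0)" if "w \<in> W" for w
        using that z(2) by (auto simp: G_def W_def Wset_def Pol_def policies_def fun_eq_iff) (metis not_less)
      then have "(\<Sum>w\<in>W. \<phi> w z) = (\<Sum>w\<in>W. if w = \<pi> 0 then 1 else 0)"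
        by (intro sum.cong refl) (simp add: \<phi>_def z)
      also have "\<dots> = 1" using finW p0 by simp
      finally show ?thesis .
    qed
    have sP: "set_pmf (hk K0 T) \<subseteq> Sx X T" by (rule supp_hk) (rule sK0)
    have S1: "(\<Sum>h\<in>Sx X T. pmf (hk K0 T) h) = 1" by (rule sum_pmf_eq_1[OF finite_Sx[OF finX] sP])
    have "(\<Sum>w\<in>W. y w) = (\<Sum>h\<in>Sx X T. pmf (hk K0 T) h * (\<Sum>w\<in>W. cnt (\<phi> w) h))"
      unfolding y_def by (simp add: sum_distrib_left sum.swap[of _ W])
    also have "\<dots> = (\<Sum>h\<in>Sx X T. pmf (hk K0 T) h * real T)"
    proof (intro sum.cong refl)
      fix h assume h: "h \<in> Sx X T"
      have "(\<Sum>w\<in>W. cnt (\<phi> w) h) = sum_list (map (\<lambda>z. \<Sum>w\<in>W. \<phi> w z) h)" by (rule sum_list_swap[OF finW])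
      also have "\<dots> = real (length h)" by (rule sum_list_ones) (use h one in \<open>auto simp: Sx_def\<close>)
      finally show "pmf (hk K0 T) h * (\<Sum>w\<in>W. cnt (\<phi> w) h) = pmf (hk K0 T) h * real T" using h by (simp add: Sx_def)
    qed
    also have "\<dots> = real T" using S1 by (simp add: sum_distrib_right[symmetric])
    finally show ?thesis .
  qed
  define B where "B = 1/64 * min (sqrt (N * real T)) (real T)"
  have "\<exists>w\<in>W. B \<le> e * (real T - x w)"
  proof (rule ccontr)
    assume "\<not> ?thesis"
    then have lt: "\<And>w. w \<in> W \<Longrightarrow> e * (real T - x w) < B" by auto
    have "(\<Sum>w\<in>W. e * (real T - x w)) < (\<Sum>w\<in>W. B)" by (rule sum_strict_mono[OF finW neW lt])
    also have "\<dots> = N * B" using NW by simp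
    finally have 1: "(\<Sum>w\<in>W. e * (real T - x w)) < N * B" .
    have "(\<Sum>w\<in>W. x w) \<le> (\<Sum>w\<in>W. y w * (1 + 8 * real T * \<kappa>) + real T / 8)" by (intro sum_mono bound)
    also have "\<dots> = real T * (1 + 8 * real T * \<kappa>) + N * real T / 8"
      using NW by (simp add: sum.distrib sum_distrib_right[symmetric] sumy)
    finally have sx: "(\<Sum>w\<in>W. x w) \<le> real T * (1 + 8 * real T * \<kappa>) + N * real T / 8" .
    have "(\<Sum>w\<in>W. e * (real T - x w)) = e * (N * real T - (\<Sum>w\<in>W. x w))"
      using NW by (simp add: sum_distrib_left[symmetric] sum_subtractf)
    also have "\<dots> \<ge> e * (N * real T - real T * (1 + 8 * real T * \<kappa>) - N * real T / 8)"
      using sx e0 by (intro mult_left_mono) auto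
    finally have 2: "e * (N * real T - real T * (1 + 8 * real T * \<kappa>) - N * real T / 8) \<le> (\<Sum>w\<in>W. e * (real T - x w))" .
    have "N * B \<le> e * (N * real T - real T * (1 + 8 * real T * \<kappa>) - N * real T / 8)"
      unfolding B_def
      by (rule final_arith[OF N2 _ e_def]) (use T kap_bound[of e] e0 in \<open>auto simp: \<kappa>_def\<close>)
    with 1 2 show False by linarith
  qed
  then obtain w where w: "w \<in> W" "B \<le> e * (real T - x w)" by blast
  show ?thesis
  proof (intro exI conjI)
    show "valid_mdp 2 H A (mkM H w e)" using H e0 by (intro valid_mkM) auto
    show "1/64 * min (sqrt (real A ^ H * real T)) (real T) \<le> exp_regret 2 H A (mkM H w e) alg T"
      using w regret[OF w(1)] by (simp add: B_def N_def)
  qed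
qed


theorem theorem3:
  shows "\<exists>c::real. c > 0 \<and>
    (\<forall>H A T::nat. \<forall>alg::algorithm. 1 \<le> H \<longrightarrow> 2 \<le> A \<longrightarrow>
       (\<forall>h. set_pmf (alg h) \<subseteq> policies 2 H A) \<longrightarrow>
       (\<exists>M. valid_mdp 2 H A M \<and>
            exp_regret 2 H A M alg T \<ge> c * min (sqrt (real A ^ H * real T)) (real T)))"
proof (intro exI[of _ "1/64"] conjI allI impI)
  fix H A T :: nat and alg :: algorithm
  assume H: "1 \<le> H" and A: "2 \<le> A" and sup: "\<forall>h. set_pmf (alg h) \<subseteq> policies 2 H A"
  show "\<exists>M. valid_mdp 2 H A M \<and>
            exp_regret 2 H A M alg T \<ge> 1/64 * min (sqrt (real A ^ H * real T)) (real T)"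
  proof (cases "T = 0")
    case True
    have v: "valid_mdp 2 H A (mkM H (\<lambda>_. 0) 0)" using H by (intro valid_mkM) auto
    have "exp_regret 2 H A (mkM H (\<lambda>_. 0) 0) alg T = 0"
      unfolding exp_regret_def True history.simps
      by (subst integral_measure_pmf_real[where A="{}"]) auto
    then show ?thesis using v True by auto
  next
    case False
    then show ?thesis using main_pos[OF H A _ ] sup by auto
  qed
qed (simp)

end
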